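(* Let $\mathcal{M}$ be the class of Borel probability measures on $\mathbb{R}$ with non-negative mean, unit variance and finite third moment, and let $\mathcal{D}$ be the discretely supported Borel probability measures on $\mathbb{R}$. For $P\in\mathcal{M}\cup\mathcal{D}$ and $\boldsymbol{z}=(z_1,z_2,\dots)\in\mathbb{R}^\infty$ let $T_k(\boldsymbol z,P)=\sqrt k\big(\max\{k^{-1}\sum_{i=1}^kz_i,0\}-\max\{E_P[Z],0\}\big)$ and let $\psi_k(P)$ be the law of $T_k(\boldsymbol z,P)$ when $\boldsymbol z$ is drawn from the product measure $P^\infty$. Then for any $k\in\mathbb{N}$ and any $P,Q\in\mathcal{M}\cup\mathcal{D}$, $$\|\psi_k(P)-\psi_k(Q)\|_{LB}\le2\sqrt k\,\mathcal{W}(P,Q).$$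
   Context: $LB$ is the class of real-valued functions bounded by one and Lipschitz with constant one, and for probability measures $\mu,\nu$ on $\mathbb{R}$, $\|\mu-\nu\|_{LB}=\sup_{f\in LB}|\int fd\mu-\int fd\nu|$. $\mathcal{W}(P,Q)=\inf_{\zeta\in H(P,Q)}\int|z-z'|\zeta(dz,dz')$ is the Wasserstein-1 distance, $H(P,Q)$ being the set of Borel probability measures on $\mathbb{R}^2$ with marginals $P$ and $Q$. *)

theory Defs
  imports "HOL-Probability.Probability"
begin

definition borel_prob :: "real measure \<Rightarrow> bool" where
  "borel_prob P \<longleftrightarrow> prob_space P \<and> sets P = sets (borel :: real measure)"

definition class_M :: "real measure set" where
  "class_M = {P. borel_prob P \<and> integrable P (\<lambda>x. x)
                 \<and> (\<integral>x. x \<partial>P) \<ge> 0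
                 \<and> integrable P (\<lambda>x. (x - (\<integral>y. y \<partial>P))\<^sup>2)
                 \<and> (\<integral>x. (x - (\<integral>y. y \<partial>P))\<^sup>2 \<partial>P) = 1
                 \<and> integrable P (\<lambda>x. \<bar>x\<bar> ^ 3)}"

definition class_D :: "real measure set" where
  "class_D = {P. borel_prob P \<and> (\<exists>A. countable A \<and> A \<in> sets P \<and> emeasure P A = 1)}"

text \<open>The statistic T_k (coordinates indexed from 0).\<close>
definition T_stat :: "nat \<Rightarrow> (nat \<Rightarrow> real) \<Rightarrow> real measure \<Rightarrow> real" where
  "T_stat k z P = sqrt (real k) *
     (max ((\<Sum>i<k. z i) / real k) 0 - max (\<integral>x. x \<partial>P) 0)"

definition psi :: "nat \<Rightarrow> real measure \<Rightarrow> real measure" where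
  "psi k P = distr (PiM (UNIV :: nat set) (\<lambda>_. P)) borel (\<lambda>z. T_stat k z P)"

definition LB :: "(real \<Rightarrow> real) set" where
  "LB = {f. (\<forall>x. \<bar>f x\<bar> \<le> 1) \<and> (\<forall>x y. \<bar>f x - f y\<bar> \<le> \<bar>x - y\<bar>)}"

definition LB_dist :: "real measure \<Rightarrow> real measure \<Rightarrow> real" where
  "LB_dist \<mu> \<nu> = (SUP f\<in>LB. \<bar>(\<integral>x. f x \<partial>\<mu>) - (\<integral>x. f x \<partial>\<nu>)\<bar>)"

definition couplings :: "real measure \<Rightarrow> real measure \<Rightarrow> (real \<times> real) measure set" where
  "couplings P Q = {\<zeta>. prob_space \<zeta> \<and> sets \<zeta> = sets (borel \<Otimes>\<^sub>M borel :: (real \<times> real) measure)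
                      \<and> distr \<zeta> borel fst = P \<and> distr \<zeta> borel snd = Q}"

definition wasserstein :: "real measure \<Rightarrow> real measure \<Rightarrow> ennreal" where
  "wasserstein P Q = (INF \<zeta>\<in>couplings P Q. \<integral>\<^sup>+ p. ennreal \<bar>fst p - snd p\<bar> \<partial>\<zeta>)"

end

theory Submission
  imports Defs
begin

lemma T_stat_cong:
  assumes "\<And>i. i < k \<Longrightarrow> z i = z' i"
  shows "T_stat k z P = T_stat k z' P"
proof -
  have "sum z {..<k} = sum z' {..<k}" by (rule sum.cong) (auto simp: assms)
  then show ?thesis unfolding T_stat_def by simp
qed

lemma psi_int:
  fixes h :: "real \<Rightarrow> real" and \<zeta> :: "'a measure"
  assumes P: "borel_prob P" and z: "prob_space \<zeta>" and pr: "pr \<in> measurable \<zeta> borel"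
    and d: "distr \<zeta> borel pr = P" and h: "h \<in> borel_measurable borel"
  shows "(\<integral>x. h x \<partial>psi k P) = (\<integral>w. h (T_stat k (\<lambda>i. pr (w i)) P) \<partial>PiM {..<k} (\<lambda>_. \<zeta>))"
proof -
  have sP: "sets P = sets borel" using P by (simp add: borel_prob_def)
  have pP: "prob_space P" using P by (simp add: borel_prob_def)
  interpret pP: product_prob_space "\<lambda>_::nat. P" UNIV by (rule product_prob_spaceI) (rule pP)
  have m0: "(\<lambda>z. T_stat k z P) \<in> borel_measurable (PiM I (\<lambda>_. borel::real measure))" if "{..<k} \<subseteq> I" for I
    unfolding T_stat_def apply measurable using that by auto
  have mT: "(\<lambda>z. T_stat k z P) \<in> borel_measurable (PiM I (\<lambda>_. P))" if "{..<k} \<subseteq> I" for I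
  proof -
    have "sets (PiM I (\<lambda>_. P)) = sets (PiM I (\<lambda>_. borel::real measure))" by (rule sets_PiM_cong) (auto simp: sP)
    then show ?thesis using m0[OF that] measurable_cong_sets[OF _ refl] by blast
  qed
  have prP: "pr \<in> measurable \<zeta> P" using pr by (simp cong: measurable_cong_sets add: sP)
  have dP: "distr \<zeta> P pr = P"
    using d by (metis distr_cong sP)
  have mc: "compose {..<k} pr \<in> measurable (PiM {..<k} (\<lambda>_. \<zeta>)) (PiM {..<k} (\<lambda>_. P))"
    unfolding compose_def by (rule measurable_restrict) (rule measurable_compose[OF measurable_component_singleton[where M="\<lambda>_. \<zeta>"] prP]; simp)
  have "(\<integral>x. h x \<partial>psi k P) = (\<integral>z. h (T_stat k z P) \<partial>PiM UNIV (\<lambda>_. P))"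
    unfolding psi_def by (rule integral_distr[OF mT[OF subset_UNIV] h])
  also have "\<dots> = (\<integral>z. h (T_stat k (restrict z {..<k}) P) \<partial>PiM UNIV (\<lambda>_. P))"
    by (intro Bochner_Integration.integral_cong refl arg_cong[where f=h] T_stat_cong) simp
  also have "\<dots> = (\<integral>y. h (T_stat k y P) \<partial>distr (PiM UNIV (\<lambda>_. P)) (PiM {..<k} (\<lambda>_. P)) (\<lambda>x. restrict x {..<k}))"
    by (rule integral_distr[symmetric, OF measurable_restrict_subset[OF subset_UNIV] measurable_compose[OF mT[OF order_refl] h]])
  also have "\<dots> = (\<integral>y. h (T_stat k y P) \<partial>PiM {..<k} (\<lambda>_. P))"
    using pP.distr_PiM_restrict_finite[of "{..<k}"] by simp
  also have "PiM {..<k} (\<lambda>_. P) = distr (PiM {..<k} (\<lambda>_. \<zeta>)) (PiM {..<k} (\<lambda>_. P)) (compose {..<k} pr)"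
    by (subst distr_PiM_finite_prob_space') (auto simp: z pP prP dP)
  also have "(\<integral>y. h (T_stat k y P) \<partial>\<dots>) = (\<integral>w. h (T_stat k (compose {..<k} pr w) P) \<partial>PiM {..<k} (\<lambda>_. \<zeta>))"
    by (rule integral_distr[OF mc measurable_compose[OF mT[OF order_refl] h]])
  also have "\<dots> = (\<integral>w. h (T_stat k (\<lambda>i. pr (w i)) P) \<partial>PiM {..<k} (\<lambda>_. \<zeta>))"
    by (intro Bochner_Integration.integral_cong refl arg_cong[where f=h] T_stat_cong) (simp add: compose_def)
  finally show ?thesis .
qed

lemma LB_meas:
  assumes "f \<in> LB" shows "f \<in> borel_measurable borel"
proof -
  have "1-lipschitz_on UNIV f"
    using assms by (intro lipschitz_onI) (auto simp: LB_def dist_real_def)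
  then show ?thesis by (intro borel_measurable_continuous_onI lipschitz_on_continuous_on)
qed

lemma coupling_facts:
  assumes "\<zeta> \<in> couplings P Q"
  shows "prob_space \<zeta>" "fst \<in> borel_measurable \<zeta>" "snd \<in> borel_measurable \<zeta>"
    "distr \<zeta> borel fst = P" "distr \<zeta> borel snd = Q"
    "(\<lambda>p. \<bar>fst p - snd p\<bar>) \<in> borel_measurable \<zeta>"
proof -
  have s: "sets \<zeta> = sets (borel \<Otimes>\<^sub>M borel :: (real \<times> real) measure)"
    using assms by (simp add: couplings_def)
  have e: "borel_measurable \<zeta> = borel_measurable (borel \<Otimes>\<^sub>M borel :: (real \<times> real) measure)"
    by (rule measurable_cong_sets[OF s refl])
  show "prob_space \<zeta>" "distr \<zeta> borel fst = P" "distr \<zeta> borel snd = Q"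
    using assms by (auto simp: couplings_def)
  show "fst \<in> borel_measurable \<zeta>" "snd \<in> borel_measurable \<zeta>"
    "(\<lambda>p. \<bar>fst p - snd p\<bar>) \<in> borel_measurable \<zeta>"
    unfolding e by measurable
qed

lemma mean_bound:
  assumes zc: "\<zeta> \<in> couplings P Q"
    and iG: "integrable \<zeta> (\<lambda>p. \<bar>fst p - snd p\<bar>)"
  shows "\<bar>max (\<integral>x. x \<partial>P) 0 - max (\<integral>x. x \<partial>Q) 0\<bar> \<le> (\<integral>p. \<bar>fst p - snd p\<bar> \<partial>\<zeta>)"
proof -
  note cf = coupling_facts[OF zc]
  have iP: "integrable P (\<lambda>x. x) \<longleftrightarrow> integrable \<zeta> fst"
    using integrable_distr_eq[OF cf(2), of "\<lambda>x. x"] cf(4) by simp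
  have iQ: "integrable Q (\<lambda>x. x) \<longleftrightarrow> integrable \<zeta> snd"
    using integrable_distr_eq[OF cf(3), of "\<lambda>x. x"] cf(5) by simp
  have eP: "(\<integral>x. x \<partial>P) = (\<integral>p. fst p \<partial>\<zeta>)"
    using integral_distr[OF cf(2), of "\<lambda>x. x"] cf(4) by simp
  have eQ: "(\<integral>x. x \<partial>Q) = (\<integral>p. snd p \<partial>\<zeta>)"
    using integral_distr[OF cf(3), of "\<lambda>x. x"] cf(5) by simp
  have iD: "integrable \<zeta> (\<lambda>p. fst p - snd p)"
    using iG integrable_abs_iff[of "\<lambda>p. fst p - snd p" \<zeta>] cf(2,3) by auto
  have c0: "0 \<le> (\<integral>p. \<bar>fst p - snd p\<bar> \<partial>\<zeta>)" by simp
  have mx: "\<bar>max a 0 - max b 0\<bar> \<le> \<bar>a - b\<bar>" for a b :: real by auto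
  show ?thesis
  proof (cases "integrable \<zeta> fst")
    case True
    then have "integrable \<zeta> (\<lambda>p. fst p - (fst p - snd p))" using iD by (rule Bochner_Integration.integrable_diff)
    then have i2: "integrable \<zeta> snd" by simp
    have "(\<integral>p. fst p \<partial>\<zeta>) - (\<integral>p. snd p \<partial>\<zeta>) = (\<integral>p. fst p - snd p \<partial>\<zeta>)"
      using True i2 by simp
    also have "\<bar>\<dots>\<bar> \<le> (\<integral>p. \<bar>fst p - snd p\<bar> \<partial>\<zeta>)" by (rule integral_abs_bound)
    finally show ?thesis using mx[of "\<integral>p. fst p \<partial>\<zeta>" "\<integral>p. snd p \<partial>\<zeta>"] eP eQ by linarith
  next
    case False
    have "\<not> integrable \<zeta> snd"
    proof
      assume "integrable \<zeta> snd"
      then have "integrable \<zeta> (\<lambda>p. snd p + (fst p - snd p))" using iD by (rule Bochner_Integration.integrable_add)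
      then show False using False by simp
    qed
    then have "(\<integral>x. x \<partial>P) = 0" "(\<integral>x. x \<partial>Q) = 0"
      using False iP iQ by (auto intro: not_integrable_integral_eq)
    then show ?thesis using c0 by simp
  qed
qed

lemma pointwise_LB:
  fixes A B mp mq :: real
  assumes f: "f \<in> LB" and k: "k \<ge> 1"
  shows "\<bar>f (sqrt (real k) * (max (A / real k) 0 - mp)) - f (sqrt (real k) * (max (B / real k) 0 - mq))\<bar>
     \<le> sqrt (real k) * (\<bar>A - B\<bar> / real k + \<bar>mp - mq\<bar>)"
proof -
  have kp: "real k > 0" using k by simp
  have sk: "sqrt (real k) \<ge> 0" by simp
  have "\<bar>f (sqrt (real k) * (max (A / real k) 0 - mp)) - f (sqrt (real k) * (max (B / real k) 0 - mq))\<bar>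
     \<le> \<bar>sqrt (real k) * (max (A / real k) 0 - mp) - sqrt (real k) * (max (B / real k) 0 - mq)\<bar>"
    using f by (simp add: LB_def)
  also have "\<dots> = \<bar>sqrt (real k) * ((max (A / real k) 0 - max (B / real k) 0) - (mp - mq))\<bar>"
    by (rule arg_cong[where f=abs]) (simp add: algebra_simps)
  also have "\<dots> = sqrt (real k) * \<bar>(max (A / real k) 0 - max (B / real k) 0) - (mp - mq)\<bar>"
    by (simp add: abs_mult)
  also have "\<dots> \<le> sqrt (real k) * (\<bar>A / real k - B / real k\<bar> + \<bar>mp - mq\<bar>)"
    by (intro mult_left_mono sk) (auto simp: abs_if max_def split: if_splits)
  also have "\<bar>A / real k - B / real k\<bar> = \<bar>A - B\<bar> / real k"
    using kp by (simp add: diff_divide_distrib[symmetric])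
  finally show ?thesis .
qed

lemma bound_coupling:
  assumes P: "borel_prob P" and Q: "borel_prob Q" and zc: "\<zeta> \<in> couplings P Q"
    and f: "f \<in> LB" and k: "k \<ge> 1"
    and iG: "integrable \<zeta> (\<lambda>p. \<bar>fst p - snd p\<bar>)"
  shows "\<bar>(\<integral>x. f x \<partial>psi k P) - (\<integral>x. f x \<partial>psi k Q)\<bar> \<le> 2 * sqrt (real k) * (\<integral>p. \<bar>fst p - snd p\<bar> \<partial>\<zeta>)"
proof -
  note cf = coupling_facts[OF zc]
  note [measurable] = cf(2) cf(3) LB_meas[OF f]
  define Z where "Z = PiM {..<k} (\<lambda>_. \<zeta>)"
  define G where "G = (\<lambda>p::real\<times>real. \<bar>fst p - snd p\<bar>)"
  define c where "c = (\<integral>p. G p \<partial>\<zeta>)"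
  define m where "m = \<bar>max (\<integral>x. x \<partial>P) 0 - max (\<integral>x. x \<partial>Q) 0\<bar>"
  have mc: "m \<le> c" using mean_bound[OF zc iG] by (simp add: m_def c_def G_def)
  interpret Zp: product_prob_space "\<lambda>_::nat. \<zeta>" "{..<k}" by (rule product_prob_spaceI) (rule cf(1))
  have pZ: "prob_space Z" unfolding Z_def by (rule prob_space_PiM) (rule cf(1))
  interpret Zs: prob_space Z by (rule pZ)
  have mG: "G \<in> borel_measurable \<zeta>" unfolding G_def by (rule cf(6))
  define a where "a = (\<lambda>w::nat\<Rightarrow>real\<times>real. f (T_stat k (\<lambda>i. fst (w i)) P))"
  define b where "b = (\<lambda>w::nat\<Rightarrow>real\<times>real. f (T_stat k (\<lambda>i. snd (w i)) Q))"
  have ma: "a \<in> borel_measurable Z" unfolding a_def Z_def T_stat_def by measurable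
  have mb: "b \<in> borel_measurable Z" unfolding b_def Z_def T_stat_def by measurable
  have ia: "integrable Z a"
    by (rule Zs.integrable_const_bound[of _ 1]) (use f ma in \<open>auto simp: a_def LB_def\<close>)
  have ib: "integrable Z b"
    by (rule Zs.integrable_const_bound[of _ 1]) (use f mb in \<open>auto simp: b_def LB_def\<close>)
  have mi: "(\<lambda>\<omega>. \<omega> i) \<in> measurable Z \<zeta>" if "i < k" for i
    unfolding Z_def using that by (intro measurable_component_singleton) auto
  have iGi: "integrable Z (\<lambda>w. G (w i))" if "i < k" for i
    using integrable_distr_eq[OF mi[OF that] mG] Zp.PiM_component[of i] iG that
    by (simp add: Z_def G_def)
  have eGi: "(\<integral>w. G (w i) \<partial>Z) = c" if "i < k" for i
    using integral_distr[OF mi[OF that] mG] Zp.PiM_component[of i] that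
    by (simp add: Z_def c_def)
  define bnd where "bnd = (\<lambda>w::nat\<Rightarrow>real\<times>real. (\<Sum>i<k. sqrt (real k) / real k * G (w i)) + sqrt (real k) * m)"
  have ibnd: "integrable Z bnd"
    unfolding bnd_def using iGi by (intro Bochner_Integration.integrable_add Bochner_Integration.integrable_sum
        integrable_mult_right) auto
  have "(\<integral>w. bnd w \<partial>Z) = (\<Sum>i<k. sqrt (real k) / real k * c) + sqrt (real k) * m"
    unfolding bnd_def using iGi eGi
    by (subst Bochner_Integration.integral_add) (auto intro!: Bochner_Integration.integrable_sum simp: Bochner_Integration.integral_sum Zs.prob_space)
  also have "(\<Sum>i<k. sqrt (real k) / real k * c) = sqrt (real k) * c"
    using k by simp
  finally have ebnd: "(\<integral>w. bnd w \<partial>Z) = sqrt (real k) * c + sqrt (real k) * m" .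
  have pw: "\<bar>a w - b w\<bar> \<le> bnd w" for w
  proof -
    let ?A = "\<Sum>i<k. fst (w i)" and ?B = "\<Sum>i<k. snd (w i)"
    have "\<bar>a w - b w\<bar> \<le> sqrt (real k) * (\<bar>?A - ?B\<bar> / real k + m)"
      unfolding a_def b_def T_stat_def m_def by (rule pointwise_LB[OF f k])
    also have "\<bar>?A - ?B\<bar> \<le> (\<Sum>i<k. G (w i))"
      unfolding G_def sum_subtractf[symmetric] by (rule sum_abs)
    then have "sqrt (real k) * (\<bar>?A - ?B\<bar> / real k + m) \<le> sqrt (real k) * ((\<Sum>i<k. G (w i)) / real k + m)"
      by (intro mult_left_mono add_right_mono divide_right_mono) auto
    also have "\<dots> = bnd w"
      unfolding bnd_def by (simp add: sum_distrib_left sum_divide_distrib algebra_simps)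
    finally show ?thesis .
  qed
  have "(\<integral>x. f x \<partial>psi k P) = (\<integral>w. a w \<partial>Z)"
    unfolding a_def Z_def by (rule psi_int[OF P cf(1) cf(2) cf(4) LB_meas[OF f]])
  moreover have "(\<integral>x. f x \<partial>psi k Q) = (\<integral>w. b w \<partial>Z)"
    unfolding b_def Z_def by (rule psi_int[OF Q cf(1) cf(3) cf(5) LB_meas[OF f]])
  ultimately have "\<bar>(\<integral>x. f x \<partial>psi k P) - (\<integral>x. f x \<partial>psi k Q)\<bar> = \<bar>\<integral>w. a w - b w \<partial>Z\<bar>"
    using ia ib by simp
  also have "\<dots> \<le> (\<integral>w. \<bar>a w - b w\<bar> \<partial>Z)" by (rule integral_abs_bound)
  also have "\<dots> \<le> (\<integral>w. bnd w \<partial>Z)"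
    using ia ib ibnd pw by (intro integral_mono) auto
  also have "\<dots> \<le> 2 * sqrt (real k) * c"
    unfolding ebnd using mult_right_mono[OF mc, of "sqrt (real k)"] by (simp add: algebra_simps)
  finally show ?thesis by (simp add: c_def G_def)
qed

theorem proposition3:
  fixes k :: nat and P Q :: "real measure"
  assumes "k \<ge> 1"
    and "P \<in> class_M \<union> class_D"
    and "Q \<in> class_M \<union> class_D"
  shows "ennreal (LB_dist (psi k P) (psi k Q)) \<le> 2 * ennreal (sqrt (real k)) * wasserstein P Q"
proof -
  have bP: "borel_prob P" using assms(2) by (auto simp: class_M_def class_D_def)
  have bQ: "borel_prob Q" using assms(3) by (auto simp: class_M_def class_D_def)
  define L where "L = LB_dist (psi k P) (psi k Q)"
  define s where "s = sqrt (real k)"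
  have sp: "s > 0" using assms(1) by (simp add: s_def)
  have LBne: "LB \<noteq> {}" by (auto simp: LB_def intro!: exI[of _ "\<lambda>_. 0"])
  have key: "ennreal (L / (2 * s)) \<le> (\<integral>\<^sup>+p. ennreal \<bar>fst p - snd p\<bar> \<partial>\<zeta>)" if zc: "\<zeta> \<in> couplings P Q" for \<zeta>
  proof (cases "(\<integral>\<^sup>+p. ennreal \<bar>fst p - snd p\<bar> \<partial>\<zeta>) = \<infinity>")
    case True then show ?thesis by simp
  next
    case False
    note cf = coupling_facts[OF zc]
    have iG: "integrable \<zeta> (\<lambda>p. \<bar>fst p - snd p\<bar>)"
      by (rule integrableI_bounded[OF cf(6)]) (use False in \<open>simp add: top.not_eq_extremum\<close>)
    have nn: "(\<integral>\<^sup>+p. ennreal \<bar>fst p - snd p\<bar> \<partial>\<zeta>) = ennreal (\<integral>p. \<bar>fst p - snd p\<bar> \<partial>\<zeta>)"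
      by (rule nn_integral_eq_integral[OF iG]) auto
    have "L \<le> 2 * s * (\<integral>p. \<bar>fst p - snd p\<bar> \<partial>\<zeta>)"
      unfolding L_def LB_dist_def s_def
      by (rule cSUP_least[OF LBne]) (rule bound_coupling[OF bP bQ zc _ assms(1) iG])
    then have "L / (2 * s) \<le> (\<integral>p. \<bar>fst p - snd p\<bar> \<partial>\<zeta>)"
      using sp by (simp add: pos_divide_le_eq mult.commute mult.left_commute)
    then show ?thesis unfolding nn by (rule ennreal_leI)
  qed
  then have W: "ennreal (L / (2 * s)) \<le> wasserstein P Q"
    unfolding wasserstein_def by (rule INF_greatest)
  have "ennreal L \<le> 2 * ennreal s * ennreal (L / (2 * s))"
  proof (cases "L \<le> 0")
    case True then show ?thesis by (simp add: ennreal_neg)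
  next
    case False
    then have "ennreal L = ennreal (2 * s * (L / (2 * s)))" using sp by simp
    also have "\<dots> = ennreal (2 * s) * ennreal (L / (2 * s))"
      using sp False by (intro ennreal_mult) auto
    also have "ennreal (2 * s) = 2 * ennreal s"
      using sp by (simp add: ennreal_mult)
    finally show ?thesis by simp
  qed
  also have "\<dots> \<le> 2 * ennreal s * wasserstein P Q"
    by (rule mult_left_mono[OF W]) simp
  finally show ?thesis unfolding L_def s_def .
qed

end
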